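(* Let $F\in\mathcal S^\sharp$ and $t<0$. Then the entire function $F_t$ has at least one zero in $\mathbb C$.
   Context: The extended Selberg class $\mathcal S^\sharp$ is the set of functions $F$, not identically zero, such that: (i) $F(s)=\sum_{n\ge1}a_n n^{-s}$, with the series converging absolutely for $\Re s>1$; (ii) $(s-1)^mF(s)$ extends to an entire function of finite order for some integer $m\ge0$; (iii) letting $m$ be the order of the pole of $F$ at $s=1$ ($m=0$ if there is no pole), there is a function $\gamma(s)=\alpha s^m(s-1)^mQ^s\prod_{i=1}^k\Gamma(\omega_i s+\mu_i)$ with $\alpha\in\mathbb C\setminus\{0\}$, $Q>0$, an integer $k\ge1$, $\omega_i>0$ and $\mu_i\in\mathbb C$ with $\Re\mu_i\ge0$, such that the (entire) function $\xi^F(s):=\gamma(s)F(s)$ satisfies $\xi^F(s)=\overline{\xi^F(1-\bar s)}$ for all $s$. For $t<0$, $F_t(s):=\sum_{n\ge1}\exp\!\left(-\frac{|t|}{4}\log^2 n\right)a_n n^{-s}$, which converges absolutely for every $s\in\mathbb C$. *)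

theory Defs
  imports "HOL-Analysis.Analysis"
begin

text \<open>Dirichlet series with coefficients a (the n = 0 term vanishes since 0 powr s = 0).\<close>
definition dir_series :: "(nat \<Rightarrow> complex) \<Rightarrow> complex \<Rightarrow> complex" where
  "dir_series a s = (\<Sum>n. a n * of_nat n powr (-s))"

text \<open>G is the entire continuation of (s-1)^m F(s); m is the order of the pole at 1
  (m = 0 or G 1 \<noteq> 0); Xi is the entire function gamma(s) F(s).\<close>
definition ext_selberg :: "(nat \<Rightarrow> complex) \<Rightarrow> bool" where
  "ext_selberg a \<longleftrightarrow>
     (\<exists>s. Re s > 1 \<and> dir_series a s \<noteq> 0) \<and>
     (\<forall>s. Re s > 1 \<longrightarrow> summable (\<lambda>n. norm (a n * of_nat n powr (-s)))) \<and>
     (\<exists>(m::nat) G. G holomorphic_on UNIV \<and>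
        (\<exists>\<rho> C. \<forall>s. norm (G s) \<le> C * exp (norm s powr \<rho>)) \<and>
        (\<forall>s. Re s > 1 \<longrightarrow> G s = (s - 1) ^ m * dir_series a s) \<and>
        (m = 0 \<or> G 1 \<noteq> 0) \<and>
        (\<exists>(\<alpha>::complex) (Q::real) (k::nat) (\<omega>::nat \<Rightarrow> real) (\<mu>::nat \<Rightarrow> complex) Xi.
           \<alpha> \<noteq> 0 \<and> Q > 0 \<and> k \<ge> 1 \<and>
           (\<forall>i<k. \<omega> i > 0 \<and> Re (\<mu> i) \<ge> 0) \<and>
           Xi holomorphic_on UNIV \<and>
           (\<forall>s. Re s > 1 \<longrightarrow>
              Xi s = \<alpha> * s ^ m * (s - 1) ^ m * of_real Q powr s *
                     (\<Prod>i<k. Gamma (of_real (\<omega> i) * s + \<mu> i)) * dir_series a s) \<and>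
           (\<forall>s. Xi s = cnj (Xi (1 - cnj s)))))"

definition deformed :: "(nat \<Rightarrow> complex) \<Rightarrow> real \<Rightarrow> complex \<Rightarrow> complex" where
  "deformed a t s = (\<Sum>n. of_real (exp (- (\<bar>t\<bar> / 4) * (ln (real n))\<^sup>2)) * a n * of_nat n powr (-s))"

end

theory Submission
  imports Defs "HOL-Complex_Analysis.Complex_Analysis"
begin

lemma norm_nat_powr: "norm (of_nat n powr (s::complex)) = real n powr Re s"
  using norm_powr_real_powr[of "of_nat n" s] by simp

lemma coeff_bound:
  assumes "summable (\<lambda>n. norm (a n * of_nat n powr (-(2::complex))))"
  obtains C where "C \<ge> 0" "\<And>n. n \<ge> 1 \<Longrightarrow> norm (a n) \<le> C * real n ^ 2"
proof -
  let ?f = "\<lambda>n. norm (a n * of_nat n powr (-(2::complex)))"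
  define C where "C = suminf ?f"
  have le: "?f n \<le> C" for n
    unfolding C_def using sum_le_suminf[OF assms, of "{n}"] by auto
  have C0: "C \<ge> 0" using le[of 0] norm_ge_zero order_trans by blast
  show ?thesis
  proof (rule that[OF C0])
    fix n :: nat assume n: "n \<ge> 1"
    have "?f n = norm (a n) * real n powr (-2)" by (simp add: norm_mult norm_nat_powr)
    also have "real n powr (-2) = inverse (real n ^ 2)"
      using n by (simp add: powr_minus powr_realpow)
    finally have "norm (a n) / real n ^ 2 \<le> C" using le[of n] by (simp add: field_simps)
    then show "norm (a n) \<le> C * real n ^ 2" using n by (simp add: field_simps)
  qed
qed

lemma gauss_pt:
  fixes T x C na :: real
  assumes T: "T > 0" and n: "n \<ge> 1" and na: "na \<le> C * real n ^ 2" and na0: "0 \<le> na"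
  shows "exp (- T * (ln (real n))\<^sup>2) * na * real n powr x
           \<le> C * exp ((x+2)^2/(2*T)) * exp (-(T/2) * (ln (real n))\<^sup>2)"
proof -
  define L where "L = ln (real n)"
  have npos: "real n > 0" using n by simp
  have n2: "real n ^ 2 = exp (2*L)"
  proof -
    have "exp (2*L) = exp L ^ 2" using exp_of_nat_mult[of 2 L] by simp
    then show ?thesis unfolding L_def using npos by simp
  qed
  have nx: "real n powr x = exp (x*L)" unfolding L_def using npos by (simp add: powr_def)
  have key: "-T*L^2 + (x+2)*L \<le> (x+2)^2/(2*T) - (T/2)*L^2"
  proof -
    have "(x+2)^2/(2*T) - (T/2)*L^2 - (-T*L^2 + (x+2)*L) = (T*L - (x+2))^2/(2*T)"
      using T by (simp add: field_simps power2_eq_square)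
    moreover have "(T*L - (x+2))^2/(2*T) \<ge> 0" using T by simp
    ultimately show ?thesis by linarith
  qed
  have "exp (- T * L\<^sup>2) * na * real n powr x \<le> exp (- T * L\<^sup>2) * (C * real n ^ 2) * real n powr x"
    using na by (intro mult_right_mono mult_left_mono) auto
  also have "\<dots> = C * exp (-T*L^2 + (x+2)*L)"
  proof -
    have "-T*L^2 + (x+2)*L = -T*L^2 + 2*L + x*L" by algebra
    then have "exp (-T*L^2 + (x+2)*L) = exp (-T*L^2) * exp (2*L) * exp (x*L)"
      by (simp only: exp_add)
    then show ?thesis by (simp add: n2 nx)
  qed
  also have "\<dots> \<le> C * exp ((x+2)^2/(2*T) - (T/2)*L^2)"
  proof (rule mult_left_mono)
    have "0 \<le> C * real n ^ 2" using na na0 by linarith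
    then show "C \<ge> 0" using npos by (simp add: zero_le_mult_iff)
  qed (use key in simp)
  also have "\<dots> = C * exp ((x+2)^2/(2*T)) * exp (-(T/2) * L\<^sup>2)"
  proof -
    have "(x+2)^2/(2*T) - (T/2)*L^2 = (x+2)^2/(2*T) + (- (T/2) * L^2)" by simp
    then show ?thesis by (simp only: exp_add mult.assoc)
  qed
  finally show ?thesis unfolding L_def .
qed

lemma gauss_summable:
  fixes T :: real assumes T: "T > 0"
  shows "summable (\<lambda>n. exp (-T * (ln (real n))\<^sup>2))"
proof (rule summable_comparison_test_ev)
  show "summable (\<lambda>n. inverse (real n ^ 2))" by (rule inverse_power_summable) simp
  define N where "N = nat \<lceil>exp (2/T)\<rceil>"
  have "eventually (\<lambda>n. n \<ge> max 1 N) at_top" by (rule eventually_ge_at_top)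
  then show "eventually (\<lambda>n. norm (exp (-T * (ln (real n))\<^sup>2)) \<le> inverse (real n ^ 2)) at_top"
  proof eventually_elim
    case (elim n)
    have npos: "real n > 0" using elim by simp
    have "real N \<ge> exp (2/T)" unfolding N_def by (rule real_nat_ceiling_ge)
    moreover have "real n \<ge> real N" using elim by simp
    ultimately have "real n \<ge> exp (2/T)" by linarith
    then have L: "ln (real n) \<ge> 2/T" using npos by (subst ln_ge_iff) auto
    have L0: "ln (real n) \<ge> 0" using elim by simp
    have "T * (ln (real n))^2 \<ge> 2 * ln (real n)"
    proof -
      have "T * ln (real n) \<ge> 2" using L T by (simp add: field_simps)
      then have "T * ln (real n) * ln (real n) \<ge> 2 * ln (real n)" using L0 by (rule mult_right_mono)
      then show ?thesis by (simp add: power2_eq_square algebra_simps)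
    qed
    then have "exp (-T * (ln (real n))\<^sup>2) \<le> exp (-2 * ln (real n))" by simp
    also have "exp (-2 * ln (real n)) = inverse (real n ^ 2)"
    proof -
      have "exp (2 * ln (real n)) = exp (ln (real n)) ^ 2" using exp_of_nat_mult[of 2 "ln (real n)"] by simp
      then have "exp (2 * ln (real n)) = real n ^ 2" using npos by simp
      then show ?thesis by (simp add: exp_minus)
    qed
    finally show ?case by simp
  qed
qed

definition dterm :: "real \<Rightarrow> (nat \<Rightarrow> complex) \<Rightarrow> nat \<Rightarrow> complex \<Rightarrow> complex" where
  "dterm T a n s = of_real (exp (- T * (ln (real n))\<^sup>2)) * a n * of_nat n powr (-s)"

definition Psi :: "real \<Rightarrow> (nat \<Rightarrow> complex) \<Rightarrow> real \<Rightarrow> real" where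
  "Psi T a x = (\<Sum>n. exp (- T * (ln (real n))\<^sup>2) * norm (a n) * real n powr (-x))"

lemma deformed_eq: "deformed a t s = (\<Sum>n. dterm (\<bar>t\<bar>/4) a n s)"
  unfolding deformed_def dterm_def by simp

lemma norm_dterm: "norm (dterm T a n s) = exp (- T * (ln (real n))\<^sup>2) * norm (a n) * real n powr (- Re s)"
  unfolding dterm_def by (simp only: norm_mult norm_of_real norm_nat_powr abs_exp_cancel uminus_complex.sel(1))

locale gbound =
  fixes T C :: real and a :: "nat \<Rightarrow> complex"
  assumes T: "T > 0" and C: "C \<ge> 0" and ab: "\<And>n. n \<ge> 1 \<Longrightarrow> norm (a n) \<le> C * real n ^ 2"
begin

definition S where "S = (\<Sum>n. exp (-(T/2) * (ln (real n))\<^sup>2))"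

lemma S_summable: "summable (\<lambda>n. exp (-(T/2) * (ln (real n))\<^sup>2))"
  using gauss_summable[of "T/2"] T by simp

lemma pt: "exp (- T * (ln (real n))\<^sup>2) * norm (a n) * real n powr x
           \<le> C * exp ((x+2)^2/(2*T)) * exp (-(T/2) * (ln (real n))\<^sup>2)"
proof (cases "n = 0")
  case True then show ?thesis using C by simp
next
  case False then show ?thesis using gauss_pt[OF T _ ab] by simp
qed

lemma sum_ok: "summable (\<lambda>n. exp (- T * (ln (real n))\<^sup>2) * norm (a n) * real n powr x)"
  and sum_le: "(\<Sum>n. exp (- T * (ln (real n))\<^sup>2) * norm (a n) * real n powr x) \<le> C * exp ((x+2)^2/(2*T)) * S"
proof -
  have sm: "summable (\<lambda>n. C * exp ((x+2)^2/(2*T)) * exp (-(T/2) * (ln (real n))\<^sup>2))"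
    by (intro summable_mult S_summable)
  show "summable (\<lambda>n. exp (- T * (ln (real n))\<^sup>2) * norm (a n) * real n powr x)"
    by (rule summable_comparison_test[OF _ sm]) (use pt in auto)
  then have "(\<Sum>n. exp (- T * (ln (real n))\<^sup>2) * norm (a n) * real n powr x)
         \<le> (\<Sum>n. C * exp ((x+2)^2/(2*T)) * exp (-(T/2) * (ln (real n))\<^sup>2))"
    by (intro suminf_le pt sm)
  also have "\<dots> = C * exp ((x+2)^2/(2*T)) * S"
    unfolding S_def by (rule suminf_mult[OF S_summable])
  finally show "(\<Sum>n. exp (- T * (ln (real n))\<^sup>2) * norm (a n) * real n powr x) \<le> C * exp ((x+2)^2/(2*T)) * S" .
qed

lemma Psi_summable: "summable (\<lambda>n. norm (dterm T a n s))"
  unfolding norm_dterm by (rule sum_ok)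

lemma dterm_summable: "summable (\<lambda>n. dterm T a n s)"
  by (rule summable_norm_cancel[OF Psi_summable])

lemma norm_le_Psi: "norm (\<Sum>n. dterm T a n s) \<le> Psi T a (Re s)"
proof -
  have "norm (\<Sum>n. dterm T a n s) \<le> (\<Sum>n. norm (dterm T a n s))"
    by (rule summable_norm[OF Psi_summable])
  then show ?thesis unfolding norm_dterm Psi_def .
qed

lemma Psi_bound: "Psi T a x \<le> C * exp ((2 - x)^2/(2*T)) * S"
proof -
  have e: "(-x + 2)^2 = (2-x)^2" by algebra
  show ?thesis using sum_le[of "-x", unfolded e] unfolding Psi_def .
qed

lemma Psi_mono: assumes "x \<ge> 0" shows "Psi T a x \<le> Psi T a 0"
  unfolding Psi_def
proof (rule suminf_le)
  fix n
  show "exp (- T * (ln (real n))\<^sup>2) * norm (a n) * real n powr (-x)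
        \<le> exp (- T * (ln (real n))\<^sup>2) * norm (a n) * real n powr (-0)"
  proof (cases "n = 0")
    case False
    then have "real n powr (-x) \<le> real n powr (-0)" using assms by (intro powr_mono) auto
    then show ?thesis by (intro mult_left_mono) auto
  qed simp
next
  show "summable (\<lambda>n. exp (- T * (ln (real n))\<^sup>2) * norm (a n) * real n powr (-x))" by (rule sum_ok)
next
  show "summable (\<lambda>n. exp (- T * (ln (real n))\<^sup>2) * norm (a n) * real n powr (-0))" by (rule sum_ok)
qed

lemma dterm_holo: "dterm T a n holomorphic_on UNIV"
proof -
  have "(\<lambda>s. of_nat n powr (-s)) holomorphic_on (UNIV::complex set)"
    by (rule holomorphic_on_powr_right) (intro holomorphic_intros)
  then have "(\<lambda>s. (of_real (exp (- T * (ln (real n))\<^sup>2)) * a n) * of_nat n powr (-s)) holomorphic_on (UNIV::complex set)"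
    by (rule holomorphic_on_mult[OF holomorphic_on_const])
  then show ?thesis unfolding dterm_def by simp
qed

lemma holo: "(\<lambda>s. \<Sum>n. dterm T a n s) holomorphic_on UNIV"
proof -
  have "(\<lambda>s. \<Sum>n. dterm T a n s) field_differentiable (at z)" for z
  proof -
    define R where "R = norm z + 1"
    have hfd: "(dterm T a n has_field_derivative deriv (dterm T a n) x) (at x)" for n x
      using holomorphic_on_imp_differentiable_at[OF dterm_holo open_UNIV UNIV_I]
      by (simp add: DERIV_deriv_iff_field_differentiable)
    have bnd: "\<forall>\<^sub>F n in sequentially. \<forall>x\<in>ball 0 R. norm (dterm T a n x)
                  \<le> exp (- T * (ln (real n))\<^sup>2) * norm (a n) * real n powr R"
    proof (intro always_eventually allI ballI)
      fix n x assume x: "x \<in> ball (0::complex) R"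
      show "norm (dterm T a n x) \<le> exp (- T * (ln (real n))\<^sup>2) * norm (a n) * real n powr R"
      proof (cases "n = 0")
        case False
        have "- Re x \<le> R" using x abs_Re_le_cmod[of x] by (simp add: dist_norm) 
        then have "real n powr (-Re x) \<le> real n powr R" using False by (intro powr_mono) auto
        then show ?thesis unfolding norm_dterm by (intro mult_left_mono) auto
      qed (simp add: norm_dterm)
    qed
    obtain g g' where g: "\<forall>x\<in>ball 0 R. ((\<lambda>n. dterm T a n x) sums g x) \<and> ((\<lambda>n. deriv (dterm T a n) x) sums g' x)
        \<and> (g has_field_derivative g' x) (at x)"
      using series_and_derivative_comparison[OF open_ball sum_ok hfd bnd] by blast
    have z: "z \<in> ball 0 R" unfolding R_def by simp
    have eq: "g x = (\<Sum>n. dterm T a n x)" if x: "x \<in> ball 0 R" for x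
    proof -
      have "(\<lambda>n. dterm T a n x) sums g x" using g x by blast
      then show ?thesis by (rule sums_unique)
    qed
    have gz: "(g has_field_derivative g' z) (at z)" using g z by blast
    have "((\<lambda>s. \<Sum>n. dterm T a n s) has_field_derivative g' z) (at z)"
      by (rule has_field_derivative_transform_within_open[OF gz open_ball z eq])
    then show ?thesis using field_differentiable_def by blast
  qed
  then show ?thesis using field_differentiable_at_within holomorphic_on_def by blast
qed

end

lemma norm_lt_lemma:
  fixes w :: complex and M :: real
  assumes "M > 0" "Re w < M"
  shows "norm w < norm (of_real (2*M) - w)"
proof -
  have "norm w ^ 2 = Re w ^ 2 + Im w ^ 2" by (rule cmod_power2)
  moreover have "norm (of_real (2*M) - w) ^ 2 = (2*M - Re w) ^ 2 + Im w ^ 2"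
    using cmod_power2[of "of_real (2*M) - w"] by simp
  moreover have "Re w ^ 2 < (2*M - Re w) ^ 2"
  proof -
    have "(2*M - Re w) ^ 2 - Re w ^ 2 = 4*M*(M - Re w)" by (simp add: power2_eq_square algebra_simps)
    moreover have "4*M*(M - Re w) > 0" using assms by simp
    ultimately show ?thesis by linarith
  qed
  ultimately have "norm w ^ 2 < norm (of_real (2*M) - w) ^ 2" by linarith
  then show ?thesis by (rule power_less_imp_less_base) simp
qed

lemma borel_car:
  fixes g :: "complex \<Rightarrow> complex"
  assumes holo: "g holomorphic_on UNIV" and B: "B \<ge> 0"
      and re: "\<And>z. Re (g z) \<le> A + B * norm z ^ 2"
  shows "norm (g z - g 0) \<le> 2 * (A - Re (g 0) + 1 + 4 * B * norm z ^ 2)"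
proof (cases "z = 0")
  case True
  have "Re (g 0) \<le> A" using re[of 0] by simp
  then show ?thesis using True B by simp
next
  case False
  define r where "r = norm z"
  have r: "r > 0" using False unfolding r_def by simp
  define R where "R = 2*r"
  have R: "R > 0" using r unfolding R_def by simp
  define M where "M = A - Re (g 0) + 1 + B * R^2"
  have A0: "Re (g 0) \<le> A" using re[of 0] by simp
  have M: "M > 0" unfolding M_def using A0 B by (simp add: add_pos_nonneg)
  define w where "w = (\<lambda>u. g (of_real R * u) - g 0)"
  have reW: "Re (w u) < M" if "norm u < 1" for u
  proof -
    have "norm (of_real R * u) \<le> R" using that R by (simp add: norm_mult)
    then have "norm (of_real R * u) ^ 2 \<le> R ^ 2" by (intro power_mono) auto
    then have "B * norm (of_real R * u) ^ 2 \<le> B * R^2" using B by (rule mult_left_mono)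
    then show ?thesis unfolding w_def M_def using re[of "of_real R * u"] by simp
  qed
  define h where "h = (\<lambda>u. w u / (of_real (2*M) - w u))"
  have den: "of_real (2*M) - w u \<noteq> 0" if "norm u < 1" for u
  proof
    assume "of_real (2*M) - w u = 0"
    then have "Re (w u) = 2*M" by (metis Re_complex_of_real eq_iff_diff_eq_0)
    then show False using reW[OF that] M by simp
  qed
  have hol: "h holomorphic_on ball 0 1"
  proof -
    have "w holomorphic_on UNIV" unfolding w_def
      by (intro holomorphic_intros holomorphic_on_compose_gen[OF _ holo, unfolded o_def]) auto
    then have "w holomorphic_on ball 0 1" by (rule holomorphic_on_subset) simp
    then show ?thesis unfolding h_def using den by (intro holomorphic_intros) auto
  qed
  have h0: "h 0 = 0" unfolding h_def w_def by simp
  have hlt: "norm (h u) < 1" if "norm u < 1" for u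
  proof -
    have "norm (w u) < norm (of_real (2*M) - w u)" by (rule norm_lt_lemma[OF M reW[OF that]])
    then show ?thesis unfolding h_def using den[OF that] by (simp add: norm_divide divide_less_eq)
  qed
  define u where "u = z / of_real R"
  have nu: "norm u = 1/2" unfolding u_def R_def r_def using r[unfolded r_def]
    by (simp add: norm_divide)
  have hu: "norm (h u) \<le> 1/2"
    using Schwarz_Lemma(1)[OF hol h0 hlt, of u] nu by simp
  have wz: "w u = g z - g 0" unfolding w_def u_def using R by simp
  have eqn: "w u * (1 + h u) = of_real (2*M) * h u"
  proof -
    have d: "of_real (2*M) - w u \<noteq> 0" using den nu by simp
    show ?thesis unfolding h_def using d by (simp add: field_simps)
  qed
  have "norm (w u) * norm (1 + h u) = 2*M * norm (h u)"
    using arg_cong[OF eqn, of norm] M by (simp add: norm_mult)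
  also have "\<dots> \<le> 2*M*(1/2)" using hu M by simp
  finally have 1: "norm (w u) * norm (1 + h u) \<le> M" by simp
  have "norm (1 + h u) \<ge> 1/2"
  proof -
    have "norm (1::complex) \<le> norm (1 + h u) + norm (h u)" using norm_triangle_ineq4[of "1 + h u" "h u"] by simp
    then show ?thesis using hu by simp
  qed
  then have "norm (w u) * (1/2) \<le> norm (w u) * norm (1 + h u)" by (intro mult_left_mono) auto
  with 1 have "norm (w u) \<le> 2*M" by simp
  also have "2*M = 2 * (A - Re (g 0) + 1 + 4 * B * norm z ^ 2)"
    unfolding M_def R_def r_def by (simp add: power2_eq_square)
  finally show ?thesis using wz by simp
qed

lemma entire_quadratic:
  fixes g :: "complex \<Rightarrow> complex"
  assumes holo: "g holomorphic_on UNIV" and B: "B \<ge> 0"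
      and re: "\<And>z. Re (g z) \<le> A + B * norm z ^ 2"
  obtains c0 c1 c2 where "\<And>z. g z = c0 + c1 * z + c2 * z^2"
proof -
  define K where "K = norm (g 0) + 2 * \<bar>A - Re (g 0) + 1\<bar> + 8 * B"
  have bnd: "norm (g z) \<le> K * norm z ^ 2" if "1 \<le> norm z" for z
  proof -
    have z2: "1 \<le> norm z ^ 2" using that by (simp add: one_le_power)
    have "norm (g z) \<le> norm (g 0) + norm (g z - g 0)" using norm_triangle_ineq2[of "g z" "g 0"] by simp
    also have "\<dots> \<le> norm (g 0) + 2 * (A - Re (g 0) + 1 + 4 * B * norm z ^ 2)"
      using borel_car[OF holo B re, of z] by simp
    also have "\<dots> \<le> norm (g 0) * norm z ^ 2 + 2 * \<bar>A - Re (g 0) + 1\<bar> * norm z ^ 2 + 8 * B * norm z ^ 2"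
    proof -
      have g1: "norm (g 0) \<le> norm (g 0) * norm z ^ 2" using z2 by (simp add: mult_le_cancel_left1)
      have g2: "2 * (A - Re (g 0) + 1) \<le> 2 * \<bar>A - Re (g 0) + 1\<bar> * norm z ^ 2"
      proof -
        have h1: "\<bar>A - Re (g 0) + 1\<bar> \<le> \<bar>A - Re (g 0) + 1\<bar> * norm z ^ 2" using z2 by (simp add: mult_le_cancel_left1)
        have aux: "\<And>X Y::real. X \<le> \<bar>X\<bar> \<Longrightarrow> \<bar>X\<bar> \<le> Y \<Longrightarrow> 2*X \<le> 2*Y" by linarith
        show ?thesis unfolding mult.assoc by (rule aux[OF abs_ge_self h1])
      qed
      have aux: "\<And>G X N B::real. G \<le> G*N \<Longrightarrow> 2*X \<le> 2*\<bar>X\<bar>*N \<Longrightarrow> G + 2*(X + 4*B*N) \<le> G*N + 2*\<bar>X\<bar>*N + 8*B*N"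
        by (simp only: ring_distribs mult.assoc)
      show ?thesis by (rule aux[OF g1 g2])
    qed
    also have "\<dots> = K * norm z ^ 2" unfolding K_def by (simp add: algebra_simps)
    finally show ?thesis .
  qed
  have sum3: "(\<Sum>k\<le>2. f k) = f 0 + f 1 + f 2" for f :: "nat \<Rightarrow> complex"
    by (simp add: numeral_2_eq_2)
  have "g z = (\<Sum>k\<le>2. (deriv^^k) g 0 / fact k * z ^ k)" for z
    by (rule Liouville_polynomial[OF holo bnd])
  then have "g z = (deriv^^0) g 0 / fact 0 * z^0 + (deriv^^1) g 0 / fact 1 * z^1 + (deriv^^2) g 0 / fact 2 * z^2" for z
    unfolding sum3 .
  then have "g z = (deriv^^0) g 0 / fact 0 + (deriv^^1) g 0 / fact 1 * z + (deriv^^2) g 0 / fact 2 * z^2" for z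
    by (simp only: power_0 power_one_right mult_1_right)
  then show ?thesis by (rule that)
qed

lemma quad_aux:
  fixes p u c D :: real
  assumes h: "\<And>x. x \<ge> 0 \<Longrightarrow> p*x^2 + u*x + c \<le> D"
  shows "p \<le> 0" and "p = 0 \<Longrightarrow> u \<le> 0"
proof -
  show "p \<le> 0"
  proof (rule ccontr)
    assume "\<not> p \<le> 0" then have p: "p > 0" by simp
    define K where "K = \<bar>u\<bar> + \<bar>D - c\<bar> + 1"
    define x where "x = K/p + 1"
    have K: "K \<ge> 1" unfolding K_def by simp
    have x1: "x \<ge> 1" unfolding x_def using K p by simp
    have "p*x = K + p" unfolding x_def using p by (simp add: field_simps)
    then have px: "p*x \<ge> K" using p by simp
    have "p*x^2 = (p*x)*x" by (simp add: power2_eq_square)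
    also have "\<dots> \<ge> K*x" using px x1 by (intro mult_right_mono) auto
    finally have a: "p*x^2 \<ge> K*x" .
    have b: "K*x = \<bar>u\<bar>*x + (\<bar>D - c\<bar> + 1)*x" unfolding K_def by (simp add: algebra_simps)
    have c1: "(\<bar>D - c\<bar> + 1)*x \<ge> \<bar>D - c\<bar> + 1" using mult_left_mono[OF x1, of "\<bar>D - c\<bar> + 1"] by simp
    have c2: "\<bar>u\<bar>*x \<ge> - (u*x)" using x1 by (simp add: abs_if)
    have "p*x^2 + u*x + c > D" using a b c1 c2 by linarith
    then show False using h[of x] x1 by simp
  qed
  assume p0: "p = 0"
  show "u \<le> 0"
  proof (rule ccontr)
    assume "\<not> u \<le> 0" then have u: "u > 0" by simp
    define x where "x = (\<bar>D - c\<bar> + 1)/u"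
    have x0: "x \<ge> 0" unfolding x_def using u by simp
    have "u*x = \<bar>D - c\<bar> + 1" unfolding x_def using u by simp
    moreover have "p*x^2 = 0" using p0 by simp
    ultimately have "p*x^2 + u*x + c > D" using abs_ge_self[of "D - c"] by linarith
    then show False using h[of x] x0 by simp
  qed
qed

lemma quad_re:
  fixes c0 c1 c2 :: complex and D :: real
  assumes h: "\<And>\<sigma> \<tau>. \<sigma> \<ge> 0 \<Longrightarrow> Re (c0 + c1 * Complex \<sigma> \<tau> + c2 * (Complex \<sigma> \<tau>)^2) \<le> D"
  shows "c2 = 0" and "Im c1 = 0"
proof -
  have R: "Re (c0 + c1 * Complex \<sigma> \<tau> + c2 * (Complex \<sigma> \<tau>)^2)
      = Re c0 + Re c1*\<sigma> - Im c1*\<tau> + Re c2*(\<sigma>^2-\<tau>^2) - Im c2*(2*\<sigma>*\<tau>)" for \<sigma> \<tau>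
    by (simp add: power2_eq_square algebra_simps)
  have "Re c2 * x^2 + Re c1 * x + Re c0 \<le> D" if "x \<ge> 0" for x
    using h[of x 0] R[of x 0] that by (simp add: algebra_simps)
  then have p1: "Re c2 \<le> 0" by (rule quad_aux(1))
  have h2: "(- Re c2) * x^2 + (- Im c1) * x + Re c0 \<le> D" if "x \<ge> 0" for x
    using h[of 0 x] R[of 0 x] by (simp add: algebra_simps)
  then have p2: "- Re c2 \<le> 0" by (rule quad_aux(1))
  then have p: "Re c2 = 0" using p1 by simp
  have mp: "- Re c2 = 0" using p by simp
  have v1: "- Im c1 \<le> 0" by (rule quad_aux(2)[OF h2 mp])
  have h3: "(- Re c2) * x^2 + (Im c1) * x + Re c0 \<le> D" if "x \<ge> 0" for x
    using h[of 0 "-x"] R[of 0 "-x"] by (simp add: algebra_simps)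
  have v2: "Im c1 \<le> 0" by (rule quad_aux(2)[OF h3 mp])
  have v: "Im c1 = 0" using v1 v2 by simp
  have h4: "(- Re c2) * x^2 + (- Im c1 - 2 * Im c2) * x + (Re c0 + Re c1 + Re c2) \<le> D" if "x \<ge> 0" for x
    using h[of 1 x] R[of 1 x] by (simp add: algebra_simps)
  have q1: "- Im c1 - 2 * Im c2 \<le> 0" by (rule quad_aux(2)[OF h4 mp])
  have h5: "(- Re c2) * x^2 + (Im c1 + 2 * Im c2) * x + (Re c0 + Re c1 + Re c2) \<le> D" if "x \<ge> 0" for x
    using h[of 1 "-x"] R[of 1 "-x"] by (simp add: algebra_simps)
  have q2: "Im c1 + 2 * Im c2 \<le> 0" by (rule quad_aux(2)[OF h5 mp])
  have q: "Im c2 = 0" using q1 q2 v by simp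
  show "c2 = 0" using p q by (simp add: complex_eq_iff)
  show "Im c1 = 0" by (rule v)
qed

lemma powr_ratio_lim:
  fixes r :: real assumes "0 < r" "r < 1"
  shows "((\<lambda>x. r powr x) \<longlongrightarrow> 0) at_top"
proof -
  have "ln r < 0" using assms by simp
  then have "LIM x at_top. ln r * x :> at_bot"
    by (intro filterlim_tendsto_neg_mult_at_bot[OF tendsto_const] filterlim_ident)
  then have "((\<lambda>x. exp (ln r * x)) \<longlongrightarrow> 0) at_top"
    by (rule filterlim_compose[OF exp_at_bot])
  moreover have "r powr x = exp (ln r * x)" for x using assms by (simp add: powr_def mult.commute)
  ultimately show ?thesis by simp
qed

lemma cpowr_real:
  assumes "k > 0"
  shows "of_nat k powr (- complex_of_real x) = complex_of_real (real k powr (-x))"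
proof -
  have "of_nat k powr (- complex_of_real x) = complex_of_real (real k) powr complex_of_real (-x)" by simp
  also have "\<dots> = complex_of_real (real k powr (-x))" by (rule powr_of_real) simp
  finally show ?thesis .
qed

lemma lead_limit:
  fixes b :: "nat \<Rightarrow> complex"
  assumes sb: "summable (\<lambda>n. norm (b n))" and n0: "n0 \<ge> 1"
      and z: "\<And>n. 1 \<le> n \<Longrightarrow> n < n0 \<Longrightarrow> b n = 0"
  shows "((\<lambda>x. of_real (real n0 powr x) * (\<Sum>n. b n * of_nat n powr (- of_real x))) \<longlongrightarrow> b n0) at_top"
proof -
  define f where "f = (\<lambda>k x. of_real (real n0 powr x) * (b k * of_nat k powr (- complex_of_real x)))"
  have f0: "f k x = 0" if "k < n0" for k x
  proof (cases "k = 0")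
    case True then show ?thesis unfolding f_def by simp
  next
    case False then show ?thesis unfolding f_def using z[of k] that by simp
  qed
  have fn: "f k x = b k * of_real ((real n0 / real k) powr x)" if "k \<ge> n0" for k x
  proof -
    have k: "k > 0" using that n0 by simp
    have "real n0 powr x * real k powr (-x) = (real n0 / real k) powr x"
      unfolding powr_divide powr_minus by (simp only: divide_inverse)
    then show ?thesis unfolding f_def cpowr_real[OF k]
      by (metis (no_types, lifting) mult.assoc mult.left_commute of_real_mult)
  qed
  have lim: "((\<lambda>x. f k x) \<longlongrightarrow> (if k = n0 then b n0 else 0)) at_top" for k
  proof (cases "k < n0")
    case True then show ?thesis using f0[OF True] by simp
  next
    case False
    show ?thesis
    proof (cases "k = n0")
      case True
      have "f k x = b n0" for x using fn[of k x] True n0 by simp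
      then show ?thesis using True by simp
    next
      case ne: False
      with False have kn: "k > n0" by simp
      have r: "0 < real n0 / real k" "real n0 / real k < 1" using kn n0 by auto
      have "((\<lambda>x. b k * of_real ((real n0 / real k) powr x)) \<longlongrightarrow> b k * of_real 0) at_top"
        by (intro tendsto_intros powr_ratio_lim[OF r])
      moreover have "f k x = b k * of_real ((real n0 / real k) powr x)" for x using fn[of k x] kn by simp
      ultimately show ?thesis using ne by simp
    qed
  qed
  have bnd: "eventually (\<lambda>(k,x). norm (f k x) \<le> norm (b k)) (at_top \<times>\<^sub>F at_top)"
    unfolding eventually_prod_filter
  proof (intro exI conjI allI impI)
    show "eventually (\<lambda>_. True) at_top" by simp
    show "eventually (\<lambda>x::real. x \<ge> 0) at_top" by (rule eventually_ge_at_top)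
    fix k :: nat and x :: real assume x: "x \<ge> 0"
    show "(\<lambda>(k,x). norm (f k x) \<le> norm (b k)) (k, x)"
    proof (cases "k < n0")
      case True then show ?thesis using f0 by simp
    next
      case False
      have r: "0 < real n0 / real k" "real n0 / real k \<le> 1" using False n0 by auto
      have "(real n0 / real k) powr x \<le> 1 powr x" using r x by (intro powr_mono2) auto
      then have "(real n0 / real k) powr x \<le> 1" by simp
      then have "norm (b k) * (real n0 / real k) powr x \<le> norm (b k) * 1" by (intro mult_left_mono) auto
      then show ?thesis using fn[of k x] False r by (simp add: norm_mult)
    qed
  qed
  have T: "((\<lambda>x. \<Sum>k. f k x) \<longlongrightarrow> (\<Sum>k. if k = n0 then b n0 else 0)) at_top"
    using tannerys_theorem[OF lim bnd sb] by simp
  have s1: "(\<Sum>k. if k = n0 then b n0 else 0) = b n0"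
    using sums_unique[OF sums_single[of n0 "\<lambda>_. b n0"]] by simp
  have ev: "eventually (\<lambda>x. (\<Sum>k. f k x) = of_real (real n0 powr x) * (\<Sum>n. b n * of_nat n powr (- of_real x))) at_top"
    using eventually_ge_at_top[of "0::real"]
  proof eventually_elim
    case (elim x)
    have "norm (b n * of_nat n powr (- complex_of_real x)) \<le> norm (b n)" for n
    proof (cases "n = 0")
      case False
      have "real n powr (-x) \<le> 1 powr (-x)" using False elim by (intro powr_mono2') auto
      then have "real n powr (-x) \<le> 1" by simp
      then have "norm (b n) * real n powr (-x) \<le> norm (b n)" by (rule mult_left_le) simp
      then show ?thesis unfolding norm_mult norm_nat_powr by simp
    qed simp
    then have "summable (\<lambda>n. norm (b n * of_nat n powr (- complex_of_real x)))"
      by (intro summable_comparison_test[OF _ sb]) auto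
    then have "summable (\<lambda>n. b n * of_nat n powr (- complex_of_real x))"
      by (rule summable_norm_cancel)
    then show ?case unfolding f_def by (rule suminf_mult)
  qed
  show ?thesis using tendsto_cong[OF ev] T s1 by simp
qed

lemma least_nz:
  fixes b :: "nat \<Rightarrow> complex"
  assumes "\<exists>n\<ge>1. b n \<noteq> 0"
  obtains n0 where "n0 \<ge> 1" "b n0 \<noteq> 0" "\<And>n. 1 \<le> n \<Longrightarrow> n < n0 \<Longrightarrow> b n = 0"
proof -
  define n0 where "n0 = (LEAST n. 1 \<le> n \<and> b n \<noteq> 0)"
  have "1 \<le> n0 \<and> b n0 \<noteq> 0" unfolding n0_def using assms by (metis (mono_tags, lifting) LeastI_ex)
  moreover have "b n = 0" if "1 \<le> n" "n < n0" for n
    using not_less_Least[of n "\<lambda>n. 1 \<le> n \<and> b n \<noteq> 0"] that unfolding n0_def by blast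
  ultimately show ?thesis using that by blast
qed

lemma single_support:
  fixes b :: "nat \<Rightarrow> complex" and C :: complex and u :: real
  assumes sb: "summable (\<lambda>n. norm (b n))" and ex: "\<exists>n\<ge>1. b n \<noteq> 0"
    and eq: "\<And>x. x \<ge> 0 \<Longrightarrow> (\<Sum>n. b n * of_nat n powr (- of_real x)) = C * of_real (exp (u * x))"
  shows "\<exists>n0\<ge>1. \<forall>n. n \<ge> 1 \<and> n \<noteq> n0 \<longrightarrow> b n = 0"
proof -
  obtain n0 where n01: "n0 \<ge> 1" and bn0: "b n0 \<noteq> 0" and below: "\<And>n. 1 \<le> n \<Longrightarrow> n < n0 \<Longrightarrow> b n = 0"
    using least_nz[OF ex] by blast
  have H: "((\<lambda>x. of_real (real n0 powr x) * (\<Sum>n. b n * of_nat n powr (- of_real x))) \<longlongrightarrow> b n0) at_top"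
    by (rule lead_limit[OF sb n01 below])
  define e where "e = u + ln (real n0)"
  define E where "E = (\<lambda>x::real. C * of_real (exp (e * x)))"
  have n0pos: "real n0 > 0" using n01 by simp
  have LE: "of_real (real n0 powr x) * (\<Sum>n. b n * of_nat n powr (- of_real x)) = E x" if "x \<ge> 0" for x
  proof -
    have "real n0 powr x * exp (u * x) = exp (e * x)"
      unfolding e_def powr_def using n0pos by (simp add: exp_add[symmetric] algebra_simps)
    then show ?thesis unfolding E_def eq[OF that]
      by (metis (no_types, lifting) mult.left_commute of_real_mult)
  qed
  have EL: "(E \<longlongrightarrow> b n0) at_top"
    using tendsto_cong[OF eventually_mono[OF eventually_ge_at_top[of "0::real"] LE]] H by simp
  have "((\<lambda>x. E (x + 1)) \<longlongrightarrow> b n0) at_top"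
  proof (rule filterlim_compose[OF EL])
    have "LIM x at_top. 1 + (x::real) :> at_top"
      using filterlim_tendsto_add_at_top[OF tendsto_const[of "1::real" at_top] filterlim_ident] by simp
    then show "LIM x at_top. x + (1::real) :> at_top" by (simp add: add.commute)
  qed
  moreover have "E (x + 1) = of_real (exp e) * E x" for x
    unfolding E_def by (simp add: distrib_left exp_add)
  ultimately have L1: "((\<lambda>x. of_real (exp e) * E x) \<longlongrightarrow> b n0) at_top" by simp
  have L2: "((\<lambda>x. of_real (exp e) * E x) \<longlongrightarrow> of_real (exp e) * b n0) at_top"
    by (intro tendsto_mult tendsto_const EL)
  have "of_real (exp e) * b n0 = b n0" by (rule tendsto_unique[OF _ L2 L1]) simp
  then have "exp e = 1" using bn0 by (metis mult_cancel_right2 of_real_eq_1_iff)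
  then have e0: "e = 0" by simp
  then have "E = (\<lambda>_. C)" unfolding E_def by simp
  then have EL': "((\<lambda>_::real. C) \<longlongrightarrow> b n0) at_top" using EL by simp
  have Cb: "C = b n0" by (rule tendsto_unique[OF _ tendsto_const EL']) simp
  define b' where "b' = (\<lambda>n. if n = n0 then 0 else b n)"
  have sb': "summable (\<lambda>n. norm (b' n))"
    by (rule summable_comparison_test[OF _ sb]) (auto simp: b'_def)
  have zero: "(\<Sum>n. b' n * of_nat n powr (- of_real x)) = 0" if x: "x \<ge> 0" for x
  proof -
    define g where "g = (\<lambda>n. b n * of_nat n powr (- complex_of_real x))"
    have gn: "norm (g n) \<le> norm (b n)" for n
    proof (cases "n = 0")
      case False
      have "real n powr (-x) \<le> 1 powr (-x)" using False x by (intro powr_mono2') auto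
      then have "real n powr (-x) \<le> 1" by simp
      then have "norm (b n) * real n powr (-x) \<le> norm (b n)" by (rule mult_left_le) simp
      then show ?thesis unfolding g_def norm_mult norm_nat_powr by simp
    qed (simp add: g_def)
    have sg: "summable g"
    proof -
      have "summable (\<lambda>n. norm (g n))" by (rule summable_comparison_test[OF _ sb]) (use gn in auto)
      then show ?thesis by (rule summable_norm_cancel)
    qed
    have "(\<lambda>n. g n - (if n = n0 then g n0 else 0)) sums (suminf g - g n0)"
      by (intro sums_diff summable_sums[OF sg] sums_single)
    moreover have "(\<lambda>n. g n - (if n = n0 then g n0 else 0)) = (\<lambda>n. b' n * of_nat n powr (- of_real x))"
      unfolding b'_def g_def by auto
    ultimately have "(\<Sum>n. b' n * of_nat n powr (- of_real x)) = suminf g - g n0"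
      using sums_unique by fastforce
    also have "suminf g = b n0 * of_real (exp (u * x))" unfolding g_def eq[OF x] Cb ..
    also have "exp (u * x) = real n0 powr (-x)"
    proof -
      have "u = - ln (real n0)" using e0 unfolding e_def by simp
      then show ?thesis using n0pos unfolding powr_def by (simp add: algebra_simps)
    qed
    also have "g n0 = b n0 * of_real (real n0 powr (-x))"
      unfolding g_def using cpowr_real[of n0 x] n01 by simp
    finally show ?thesis by simp
  qed
  have "\<forall>n. n \<ge> 1 \<and> n \<noteq> n0 \<longrightarrow> b n = 0"
  proof (rule ccontr)
    assume "\<not> (\<forall>n. n \<ge> 1 \<and> n \<noteq> n0 \<longrightarrow> b n = 0)"
    then have "\<exists>n\<ge>1. b' n \<noteq> 0" unfolding b'_def by auto
    then obtain n1 where n11: "n1 \<ge> 1" and bn1: "b' n1 \<noteq> 0" and below1: "\<And>n. 1 \<le> n \<Longrightarrow> n < n1 \<Longrightarrow> b' n = 0"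
      using least_nz by blast
    have H1: "((\<lambda>x. of_real (real n1 powr x) * (\<Sum>n. b' n * of_nat n powr (- of_real x))) \<longlongrightarrow> b' n1) at_top"
      by (rule lead_limit[OF sb' n11 below1])
    have "eventually (\<lambda>x. of_real (real n1 powr x) * (\<Sum>n. b' n * of_nat n powr (- of_real x)) = (0::complex)) at_top"
      by (rule eventually_mono[OF eventually_ge_at_top[of "0::real"]]) (simp add: zero)
    then have "((\<lambda>x. of_real (real n1 powr x) * (\<Sum>n. b' n * of_nat n powr (- of_real x))) \<longlongrightarrow> (0::complex)) at_top"
      by (rule tendsto_eventually)
    then have "b' n1 = 0" using tendsto_unique[OF _ H1] by simp
    then show False using bn1 by simp
  qed
  then show ?thesis using n01 by blast
qed

lemma dir_single:
  assumes z: "\<And>n. n \<ge> 1 \<Longrightarrow> n \<noteq> n0 \<Longrightarrow> a n = 0" and n01: "n0 \<ge> 1"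
  shows "dir_series a s = a n0 * of_nat n0 powr (-s)"
proof -
  have "(\<lambda>n. a n * of_nat n powr (-s)) = (\<lambda>n. if n = n0 then a n0 * of_nat n0 powr (-s) else 0)"
  proof
    fix n show "a n * of_nat n powr (-s) = (if n = n0 then a n0 * of_nat n0 powr (-s) else 0)"
    proof (cases "n = 0")
      case True then show ?thesis using n01 by simp
    next
      case False then show ?thesis using z[of n] by auto
    qed
  qed
  then show ?thesis unfolding dir_series_def
    using sums_unique[OF sums_single[of n0 "\<lambda>_. a n0 * of_nat n0 powr (-s)"]] by simp
qed

lemma Gamma_rGamma_one: "Re z > 0 \<Longrightarrow> Gamma z * rGamma z = 1"
proof -
  assume "Re z > 0"
  then have "z \<notin> \<int>\<^sub>\<le>\<^sub>0" by (auto elim!: nonpos_Ints_cases)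
  then have "Gamma z \<noteq> 0" by (simp add: Gamma_eq_zero_iff)
  then show ?thesis by (simp add: rGamma_inverse_Gamma)
qed

lemma no_single:
  assumes es: "ext_selberg a" and n01: "n0 \<ge> 1" and an0: "a n0 \<noteq> 0"
      and z: "\<And>n. n \<ge> 1 \<Longrightarrow> n \<noteq> n0 \<Longrightarrow> a n = 0"
  shows False
proof -
  from es[unfolded ext_selberg_def] obtain m :: nat and G where
    rest: "\<exists>(\<alpha>::complex) (Q::real) (k::nat) (\<omega>::nat \<Rightarrow> real) (\<mu>::nat \<Rightarrow> complex) Xi.
           \<alpha> \<noteq> 0 \<and> Q > 0 \<and> k \<ge> 1 \<and>
           (\<forall>i<k. \<omega> i > 0 \<and> Re (\<mu> i) \<ge> 0) \<and>
           Xi holomorphic_on UNIV \<and>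
           (\<forall>s. Re s > 1 \<longrightarrow>
              Xi s = \<alpha> * s ^ m * (s - 1) ^ m * of_real Q powr s *
                     (\<Prod>i<k. Gamma (of_real (\<omega> i) * s + \<mu> i)) * dir_series a s) \<and>
           (\<forall>s. Xi s = cnj (Xi (1 - cnj s)))"
    by blast
  then obtain \<alpha> :: complex and Q :: real and k :: nat and \<omega> :: "nat \<Rightarrow> real" and \<mu> :: "nat \<Rightarrow> complex" and Xi
    where al: "\<alpha> \<noteq> 0" and Q: "Q > 0" and k: "k \<ge> 1" and om: "\<forall>i<k. \<omega> i > 0 \<and> Re (\<mu> i) \<ge> 0"
      and hXi: "Xi holomorphic_on UNIV"
      and eqXi: "\<forall>s. Re s > 1 \<longrightarrow>
              Xi s = \<alpha> * s ^ m * (s - 1) ^ m * of_real Q powr s *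
                     (\<Prod>i<k. Gamma (of_real (\<omega> i) * s + \<mu> i)) * dir_series a s"
    by blast
  define P where "P = (\<lambda>s. \<Prod>i<k. rGamma (of_real (\<omega> i) * s + \<mu> i))"
  define Lf where "Lf = (\<lambda>s. Xi s * P s)"
  define Rf where "Rf = (\<lambda>s. \<alpha> * s ^ m * (s - 1) ^ m * of_real Q powr s * (a n0 * of_nat n0 powr (-s)))"
  have eqLR: "Lf s = Rf s" if s: "s \<in> {s. Re s > 1}" for s
  proof -
    have "(\<Prod>i<k. Gamma (of_real (\<omega> i) * s + \<mu> i)) * P s
        = (\<Prod>i<k. Gamma (of_real (\<omega> i) * s + \<mu> i) * rGamma (of_real (\<omega> i) * s + \<mu> i))"
      unfolding P_def by (rule prod.distrib[symmetric])
    also have "\<dots> = (\<Prod>i<k. 1)"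
    proof (rule prod.cong[OF refl])
      fix i assume "i \<in> {..<k}"
      then have "\<omega> i > 0" "Re (\<mu> i) \<ge> 0" using om by auto
      moreover have "Re s > 1" using s by simp
      ultimately have "Re (of_real (\<omega> i) * s + \<mu> i) > 0" by (simp add: add_pos_nonneg)
      then show "Gamma (of_real (\<omega> i) * s + \<mu> i) * rGamma (of_real (\<omega> i) * s + \<mu> i) = 1"
        by (rule Gamma_rGamma_one)
    qed
    finally have pr: "(\<Prod>i<k. Gamma (of_real (\<omega> i) * s + \<mu> i)) * P s = 1" by simp
    have "Lf s = \<alpha> * s ^ m * (s - 1) ^ m * of_real Q powr s * (a n0 * of_nat n0 powr (-s))
                 * ((\<Prod>i<k. Gamma (of_real (\<omega> i) * s + \<mu> i)) * P s)"
      unfolding Lf_def using eqXi s dir_single[OF z n01, where s=s] by (simp add: ac_simps)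
    then show ?thesis unfolding Rf_def pr by simp
  qed
  have hL: "Lf holomorphic_on UNIV" unfolding Lf_def P_def
    by (intro holomorphic_intros hXi)
  have hR: "Rf holomorphic_on UNIV" unfolding Rf_def
    by (intro holomorphic_intros)
  define s0 where "s0 = (- \<mu> 0 - 1) / of_real (\<omega> 0)"
  have om0: "\<omega> 0 > 0" "Re (\<mu> 0) \<ge> 0" using om k by auto
  have args: "of_real (\<omega> 0) * s0 + \<mu> 0 = -1" unfolding s0_def using om0 by (simp add: field_simps)
  have ne: "{s. Re s > 1} \<noteq> {}" using exI[of "\<lambda>s. Re s > 1" 2] by auto
  have LR: "Lf s0 = Rf s0"
    by (rule analytic_continuation_open[of "{s. Re s > 1}" UNIV Lf Rf s0])
       (use open_halfspace_Re_gt hL hR eqLR ne in auto)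
  have "P s0 = 0" unfolding P_def
  proof (rule prod_zero)
    show "finite {..<k}" by simp
    have "rGamma (of_real (\<omega> 0) * s0 + \<mu> 0) = 0" unfolding args by (simp add: rGamma_eq_zero_iff)
    then show "\<exists>i\<in>{..<k}. rGamma (of_real (\<omega> i) * s0 + \<mu> i) = 0" using k by force
  qed
  then have L0: "Lf s0 = 0" unfolding Lf_def by simp
  have Re0: "Re s0 < 0" unfolding s0_def using om0 by (simp add: divide_neg_pos add_pos_nonneg)
  have "s0 \<noteq> 0" using Re0 by auto
  moreover have "s0 - 1 \<noteq> 0" using Re0 by auto
  moreover have "of_real Q powr s0 \<noteq> 0" using Q by (simp add: powr_def)
  moreover have "(of_nat n0 :: complex) powr (-s0) \<noteq> 0" using n01 by (simp add: powr_def)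
  ultimately have "Rf s0 \<noteq> 0" unfolding Rf_def using al an0 by simp
  then show False using L0 LR by simp
qed

theorem mainTheorem10:
  fixes a :: "nat \<Rightarrow> complex" and t :: real
  assumes "ext_selberg a" and "t < 0"
  shows "\<exists>s. deformed a t s = 0"
proof (rule ccontr)
  assume nz0: "\<not> (\<exists>s. deformed a t s = 0)"
  note es = assms(1)
  define T where "T = \<bar>t\<bar>/4"
  have T: "T > 0" unfolding T_def using assms(2) by simp
  have ex0: "\<exists>s. Re s > 1 \<and> dir_series a s \<noteq> 0"
    and absc: "\<forall>s. Re s > 1 \<longrightarrow> summable (\<lambda>n. norm (a n * of_nat n powr (-s)))"
    using es unfolding ext_selberg_def by blast+
  have s2: "summable (\<lambda>n. norm (a n * of_nat n powr (-(2::complex))))" using absc by simp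
  obtain C where C: "C \<ge> 0" and ab: "\<And>n. n \<ge> 1 \<Longrightarrow> norm (a n) \<le> C * real n ^ 2"
    using coeff_bound[OF s2] by blast
  interpret gbound T C a by unfold_locales (use T C ab in auto)
  define F where "F = (\<lambda>s. \<Sum>n. dterm T a n s)"
  have Fd: "deformed a t s = F s" for s unfolding F_def T_def by (rule deformed_eq)
  have nz: "F s \<noteq> 0" for s using nz0 Fd by metis
  have hF: "F holomorphic_on UNIV" unfolding F_def by (rule holo)
  obtain g where hg: "g holomorphic_on UNIV" and Fg: "\<And>z. z \<in> UNIV \<Longrightarrow> F z = exp (g z)"
    using contractible_imp_holomorphic_log[OF hF contractible_UNIV] nz by metis
  have S0: "S \<ge> 0" unfolding S_def by (intro suminf_nonneg S_summable) simp
  define A where "A = ln (C * S + 1) + 4 / T"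
  define B where "B = 1 / T"
  have B0: "B \<ge> 0" unfolding B_def using T by simp
  have reb: "Re (g z) \<le> A + B * norm z ^ 2" for z
  proof -
    have "exp (Re (g z)) = norm (F z)" using Fg[of z] by simp
    also have "\<dots> \<le> Psi T a (Re z)" unfolding F_def by (rule norm_le_Psi)
    also have "\<dots> \<le> C * exp ((2 - Re z)^2/(2*T)) * S" by (rule Psi_bound)
    also have "\<dots> \<le> (C * S + 1) * exp ((8 + 2 * norm z ^ 2)/(2*T))"
    proof -
      have "\<bar>Re z\<bar> ^ 2 \<le> norm z ^ 2" by (rule power_mono[OF abs_Re_le_cmod abs_ge_zero])
      then have "Re z ^ 2 \<le> norm z ^ 2" by simp
      moreover have "(2 - Re z)^2 \<le> 8 + 2 * Re z ^ 2"
      proof -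
        have "(2 - Re z)^2 = 8 + 2 * Re z ^ 2 - (2 + Re z)^2" by (simp add: power2_eq_square algebra_simps)
        then show ?thesis by simp
      qed
      ultimately have "(2 - Re z)^2 \<le> 8 + 2 * norm z ^ 2" by linarith
      then have "exp ((2 - Re z)^2/(2*T)) \<le> exp ((8 + 2 * norm z ^ 2)/(2*T))"
        using T by (simp add: divide_right_mono)
      moreover have "C * S \<le> C * S + 1" by simp
      ultimately have "(C * S) * exp ((2 - Re z)^2/(2*T)) \<le> (C * S + 1) * exp ((8 + 2 * norm z ^ 2)/(2*T))"
        using C S0 by (intro mult_mono) auto
      then show ?thesis by (simp add: ac_simps)
    qed
    finally have "exp (Re (g z)) \<le> (C * S + 1) * exp ((8 + 2 * norm z ^ 2)/(2*T))" .
    moreover have CS: "0 < C * S + 1" using mult_nonneg_nonneg[OF C S0] by linarith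
    moreover have pos: "0 < (C * S + 1) * exp ((8 + 2 * norm z ^ 2)/(2*T))"
      by (rule mult_pos_pos[OF CS exp_gt_zero])
    ultimately have "Re (g z) \<le> ln ((C * S + 1) * exp ((8 + 2 * norm z ^ 2)/(2*T)))"
      using ln_ge_iff[OF pos] by simp
    also have "\<dots> = ln (C * S + 1) + (8 + 2 * norm z ^ 2)/(2*T)"
      using CS by (simp add: ln_mult)
    also have "(8 + 2 * norm z ^ 2)/(2*T) = 4 / T + 1 / T * norm z ^ 2" using T by (simp add: field_simps)
    finally show ?thesis unfolding A_def B_def by simp
  qed
  obtain c0 c1 c2 where gq: "\<And>z. g z = c0 + c1 * z + c2 * z^2"
    using entire_quadratic[OF hg B0 reb] by blast
  have Psi0: "Psi T a 0 > 0"
  proof -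
    have "0 < norm (F 0)" using nz[of 0] by simp
    also have "\<dots> \<le> Psi T a (Re 0)" unfolding F_def by (rule norm_le_Psi)
    finally show ?thesis by simp
  qed
  have hre: "Re (c0 + c1 * Complex \<sigma> \<tau> + c2 * (Complex \<sigma> \<tau>)^2) \<le> ln (Psi T a 0)" if "\<sigma> \<ge> 0" for \<sigma> \<tau>
  proof -
    let ?z = "Complex \<sigma> \<tau>"
    have "exp (Re (g ?z)) = norm (F ?z)" using Fg[of ?z] by simp
    also have "\<dots> \<le> Psi T a (Re ?z)" unfolding F_def by (rule norm_le_Psi)
    also have "\<dots> \<le> Psi T a 0" using that by (intro Psi_mono) simp
    finally have "Re (g ?z) \<le> ln (Psi T a 0)" using Psi0 by (subst ln_ge_iff) auto
    then show ?thesis using gq[of ?z] by simp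
  qed
  have c2: "c2 = 0" and c1: "Im c1 = 0" using quad_re[OF hre] by auto
  define u where "u = Re c1"
  have c1u: "c1 = of_real u" unfolding u_def using c1 by (simp add: complex_eq_iff)
  define b where "b = (\<lambda>n. dterm T a n 0)"
  have bterm: "b n * of_nat n powr (-s) = dterm T a n s" for n s
    unfolding b_def dterm_def by (cases "n = 0") auto
  have sb: "summable (\<lambda>n. norm (b n))" unfolding b_def by (rule Psi_summable)
  have bne: "b n \<noteq> 0 \<longleftrightarrow> a n \<noteq> 0" if "n \<ge> 1" for n
    unfolding b_def dterm_def using that by simp
  have exa: "\<exists>n\<ge>1. a n \<noteq> 0"
  proof (rule ccontr)
    assume "\<not> (\<exists>n\<ge>1. a n \<noteq> 0)"
    then have t0: "a n * of_nat n powr (-s) = 0" for n s by (cases "n = 0") auto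
    have "dir_series a s = 0" for s unfolding dir_series_def by (simp only: t0 suminf_zero)
    then show False using ex0 by blast
  qed
  then have exb: "\<exists>n\<ge>1. b n \<noteq> 0" using bne by blast
  have eqb: "(\<Sum>n. b n * of_nat n powr (- of_real x)) = exp c0 * of_real (exp (u * x))" if "x \<ge> 0" for x
  proof -
    have "(\<Sum>n. b n * of_nat n powr (- of_real x)) = F (of_real x)" unfolding F_def bterm ..
    also have "\<dots> = exp (g (of_real x))" by (rule Fg) simp
    also have "\<dots> = exp (c0 + of_real (u * x))" unfolding gq c2 c1u by simp
    also have "\<dots> = exp c0 * of_real (exp (u * x))" by (simp only: exp_add exp_of_real)
    finally show ?thesis .
  qed
  obtain n0 where n01: "n0 \<ge> 1" and zb: "\<forall>n. n \<ge> 1 \<and> n \<noteq> n0 \<longrightarrow> b n = 0"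
    using single_support[OF sb exb eqb] by blast
  have za: "a n = 0" if "n \<ge> 1" "n \<noteq> n0" for n using zb that bne by blast
  have an0: "a n0 \<noteq> 0" using exa za by blast
  show False by (rule no_single[OF es n01 an0 za])
qed

end
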